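(* Let $X,Y$ be orbit-finite sets and let $F$ be an equivariant set of finitely supported functions $X\to Y$. Then $F$ is orbit-finite if and only if there is $k\in\mathbb N$ such that every function in $F$ is supported by at most $k$ atoms.
   Context: Fix a countably infinite set $\mathbb A$ of atoms; atom automorphisms are bijections of $\mathbb A$. For a set with an action of atom automorphisms, $x$ is supported by $\bar a\in\mathbb A^*$ if every automorphism fixing $\bar a$ pointwise fixes $x$; it is finitely supported if some finite tuple supports it, and a set is equivariant if it is mapped to itself by all automorphisms. Automorphisms act on functions by $\pi(f)=\pi\circ f\circ\pi^{-1}$. A subset $Y$ is orbit-finite if all its elements are finitely supported and for some tuple $\bar a$ it is a union of finitely many orbits of the group of automorphisms fixing $\bar a$ pointwise. "Supported by at most $k$ atoms" means supported by some tuple of length at most $k$. *)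

theory Defs
  imports "HOL-Library.FuncSet"
begin

text \<open>Atoms are the natural numbers (a countably infinite set); atom automorphisms
are bijections nat to nat.\<close>

type_synonym atom = nat

definition atom_aut :: "(atom \<Rightarrow> atom) set" where
  "atom_aut = {\<pi>. bij \<pi>}"

definition is_action :: "((atom \<Rightarrow> atom) \<Rightarrow> 'a \<Rightarrow> 'a) \<Rightarrow> bool" where
  "is_action act \<longleftrightarrow> (\<forall>x. act id x = x) \<and>
     (\<forall>\<pi>\<in>atom_aut. \<forall>\<sigma>\<in>atom_aut. \<forall>x. act (\<pi> \<circ> \<sigma>) x = act \<pi> (act \<sigma> x))"

definition fix_aut :: "atom list \<Rightarrow> (atom \<Rightarrow> atom) set" where
  "fix_aut as = {\<pi>\<in>atom_aut. \<forall>a\<in>set as. \<pi> a = a}"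

definition supports :: "((atom \<Rightarrow> atom) \<Rightarrow> 'a \<Rightarrow> 'a) \<Rightarrow> atom list \<Rightarrow> 'a \<Rightarrow> bool" where
  "supports act as x \<longleftrightarrow> (\<forall>\<pi>\<in>fix_aut as. act \<pi> x = x)"

definition fin_supp :: "((atom \<Rightarrow> atom) \<Rightarrow> 'a \<Rightarrow> 'a) \<Rightarrow> 'a \<Rightarrow> bool" where
  "fin_supp act x \<longleftrightarrow> (\<exists>as. supports act as x)"

definition supp_by_at_most :: "((atom \<Rightarrow> atom) \<Rightarrow> 'a \<Rightarrow> 'a) \<Rightarrow> nat \<Rightarrow> 'a \<Rightarrow> bool" where
  "supp_by_at_most act k x \<longleftrightarrow> (\<exists>as. length as \<le> k \<and> supports act as x)"

definition equivariant :: "((atom \<Rightarrow> atom) \<Rightarrow> 'a \<Rightarrow> 'a) \<Rightarrow> 'a set \<Rightarrow> bool" where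
  "equivariant act S \<longleftrightarrow> (\<forall>\<pi>\<in>atom_aut. act \<pi> ` S = S)"

definition orbit_under :: "(atom \<Rightarrow> atom) set \<Rightarrow> ((atom \<Rightarrow> atom) \<Rightarrow> 'a \<Rightarrow> 'a) \<Rightarrow> 'a \<Rightarrow> 'a set" where
  "orbit_under G act x = (\<lambda>\<pi>. act \<pi> x) ` G"

definition orbit_finite :: "((atom \<Rightarrow> atom) \<Rightarrow> 'a \<Rightarrow> 'a) \<Rightarrow> 'a set \<Rightarrow> bool" where
  "orbit_finite act Y \<longleftrightarrow> (\<forall>y\<in>Y. fin_supp act y) \<and>
     (\<exists>as. \<exists>R. finite R \<and> Y = (\<Union>r\<in>R. orbit_under (fix_aut as) act r))"

text \<open>Functions X -> Y are represented as extensional HOL functions (value undefined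
outside X); the action is pi(f) = pi o f o pi^-1 on X.\<close>
definition fun_act :: "((atom \<Rightarrow> atom) \<Rightarrow> 'x \<Rightarrow> 'x) \<Rightarrow> ((atom \<Rightarrow> atom) \<Rightarrow> 'y \<Rightarrow> 'y) \<Rightarrow> 'x set
     \<Rightarrow> (atom \<Rightarrow> atom) \<Rightarrow> ('x \<Rightarrow> 'y) \<Rightarrow> ('x \<Rightarrow> 'y)" where
  "fun_act actX actY X \<pi> f = (\<lambda>x. if x \<in> X then actY \<pi> (f (actX (inv \<pi>) x)) else undefined)"

end

theory Submission
  imports Defs
begin

lemma aut_inv: "\<pi> \<in> atom_aut \<Longrightarrow> inv \<pi> \<in> atom_aut"
  by (simp add: atom_aut_def bij_imp_bij_inv)
lemma aut_comp: "\<pi> \<in> atom_aut \<Longrightarrow> \<sigma> \<in> atom_aut \<Longrightarrow> \<pi> \<circ> \<sigma> \<in> atom_aut"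
  by (simp add: atom_aut_def bij_comp)
lemma aut_id: "id \<in> atom_aut" by (simp add: atom_aut_def)
lemma fix_aut_sub: "fix_aut as \<subseteq> atom_aut" by (auto simp: fix_aut_def)
lemma fix_aut_Nil: "fix_aut [] = atom_aut" by (auto simp: fix_aut_def)
lemma fix_aut_inv: "\<pi> \<in> fix_aut as \<Longrightarrow> inv \<pi> \<in> fix_aut as"
  by (auto simp: fix_aut_def atom_aut_def bij_imp_bij_inv intro!: inv_f_eq bij_is_inj)
lemma fix_aut_comp: "\<pi> \<in> fix_aut as \<Longrightarrow> \<sigma> \<in> fix_aut as \<Longrightarrow> \<pi> \<circ> \<sigma> \<in> fix_aut as"
  by (auto simp: fix_aut_def aut_comp)
lemma fix_aut_id: "id \<in> fix_aut as" by (simp add: fix_aut_def aut_id)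

definition comp_law :: "((atom \<Rightarrow> atom) \<Rightarrow> 'a \<Rightarrow> 'a) \<Rightarrow> bool" where
  "comp_law act \<longleftrightarrow> (\<forall>\<pi>\<in>atom_aut. \<forall>\<sigma>\<in>atom_aut. \<forall>x. act (\<pi> \<circ> \<sigma>) x = act \<pi> (act \<sigma> x))"

lemma is_action_comp_law: "is_action act \<Longrightarrow> comp_law act"
  by (simp add: is_action_def comp_law_def)

lemma cl: "comp_law act \<Longrightarrow> \<pi> \<in> atom_aut \<Longrightarrow> \<sigma> \<in> atom_aut \<Longrightarrow> act (\<pi> \<circ> \<sigma>) x = act \<pi> (act \<sigma> x)"
  by (simp add: comp_law_def)

lemma act_inv_act: "is_action act \<Longrightarrow> \<pi> \<in> atom_aut \<Longrightarrow> act (inv \<pi>) (act \<pi> x) = x"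
proof -
  assume a: "is_action act" "\<pi> \<in> atom_aut"
  then have "act (inv \<pi>) (act \<pi> x) = act (inv \<pi> \<circ> \<pi>) x"
    by (simp add: is_action_def aut_inv)
  also have "inv \<pi> \<circ> \<pi> = id" using a(2) by (simp add: atom_aut_def bij_is_inj)
  finally show ?thesis using a(1) unfolding is_action_def id_def by simp
qed

lemma supports_agree:
  assumes "comp_law act" "supports act bs r" "\<pi>1 \<in> atom_aut" "\<pi>2 \<in> atom_aut"
    "\<forall>b\<in>set bs. \<pi>1 b = \<pi>2 b"
  shows "act \<pi>1 r = act \<pi>2 r"
proof -
  have b2: "bij \<pi>2" using assms(4) by (simp add: atom_aut_def)
  have t: "inv \<pi>2 \<circ> \<pi>1 \<in> fix_aut bs"
    using assms(3,4,5) b2 by (auto simp: fix_aut_def aut_inv aut_comp bij_is_inj)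
  have e: "\<pi>2 \<circ> (inv \<pi>2 \<circ> \<pi>1) = \<pi>1" using b2
    by (simp add: fun_eq_iff bij_is_surj surj_f_inv_f)
  have "act \<pi>1 r = act (\<pi>2 \<circ> (inv \<pi>2 \<circ> \<pi>1)) r" by (simp add: e)
  also have "\<dots> = act \<pi>2 (act (inv \<pi>2 \<circ> \<pi>1) r)"
    using assms(1,4) t fix_aut_sub by (blast intro: cl)
  also have "act (inv \<pi>2 \<circ> \<pi>1) r = r" using assms(2) t by (simp add: supports_def)
  finally show ?thesis .
qed

lemma supports_act:
  assumes "comp_law act" "supports act bs r" "\<pi> \<in> atom_aut"
  shows "supports act (map \<pi> bs) (act \<pi> r)"
  unfolding supports_def
proof
  fix \<sigma> assume s: "\<sigma> \<in> fix_aut (map \<pi> bs)"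
  have sa: "\<sigma> \<in> atom_aut" using s fix_aut_sub by blast
  have "act \<sigma> (act \<pi> r) = act (\<sigma> \<circ> \<pi>) r" using cl[OF assms(1) sa assms(3)] by simp
  also have "\<dots> = act \<pi> r"
    by (rule supports_agree[OF assms(1,2) aut_comp[OF sa assms(3)] assms(3)])
       (use s in \<open>auto simp: fix_aut_def\<close>)
  finally show "act \<sigma> (act \<pi> r) = act \<pi> r" .
qed

lemma supports_mono: "set as \<subseteq> set bs \<Longrightarrow> supports act as x \<Longrightarrow> supports act bs x"
  by (auto simp: supports_def fix_aut_def)

definition sw :: "atom \<Rightarrow> atom \<Rightarrow> atom \<Rightarrow> atom" where
  "sw a b x = (if x = a then b else if x = b then a else x)"

lemma bij_sw: "bij (sw a b)"
proof -
  have "sw a b \<circ> sw a b = id" by (auto simp: sw_def fun_eq_iff)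
  then show ?thesis using o_bij by blast
qed

lemma ext_bij:
  fixes xs ys :: "atom list"
  shows "distinct xs \<Longrightarrow> distinct ys \<Longrightarrow> length xs = length ys \<Longrightarrow> set xs \<inter> D = {} \<Longrightarrow> set ys \<inter> D = {}
   \<Longrightarrow> \<exists>\<sigma>. bij \<sigma> \<and> (\<forall>d\<in>D. \<sigma> d = d) \<and> (\<forall>i<length xs. \<sigma> (xs!i) = ys!i)"
proof (induction xs arbitrary: ys)
  case Nil
  then show ?case by (intro exI[of _ id]) (auto simp: id_def[symmetric])
next
  case (Cons x xs)
  then obtain y ys' where ys: "ys = y # ys'" by (cases ys) auto
  have "\<exists>\<sigma>. bij \<sigma> \<and> (\<forall>d\<in>D. \<sigma> d = d) \<and> (\<forall>i<length xs. \<sigma> (xs!i) = ys'!i)"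
    using Cons.IH[of ys'] Cons.prems ys by auto
  then obtain \<sigma> where \<sigma>: "bij \<sigma>" "\<forall>d\<in>D. \<sigma> d = d" "\<forall>i<length xs. \<sigma> (xs!i) = ys'!i"
    by blast
  have inj: "inj \<sigma>" using \<sigma>(1) bij_is_inj by blast
  define \<tau> where "\<tau> = sw (\<sigma> x) y \<circ> \<sigma>"
  have "bij \<tau>" unfolding \<tau>_def by (rule bij_comp[OF \<sigma>(1) bij_sw])
  moreover have "\<forall>d\<in>D. \<tau> d = d"
  proof
    fix d assume d: "d \<in> D"
    have "\<sigma> x \<noteq> d" using \<sigma>(2) d Cons.prems(4) inj by (metis disjoint_iff injD list.set_intros(1))
    moreover have "y \<noteq> d" using d Cons.prems(5) ys by auto
    ultimately show "\<tau> d = d" using \<sigma>(2) d by (auto simp: \<tau>_def sw_def)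
  qed
  moreover have "\<forall>i<length (x#xs). \<tau> ((x#xs)!i) = ys!i"
  proof (intro allI impI)
    fix i assume i: "i < length (x#xs)"
    show "\<tau> ((x#xs)!i) = ys!i"
    proof (cases i)
      case 0 then show ?thesis by (simp add: \<tau>_def sw_def ys)
    next
      case (Suc j)
      with i have j: "j < length xs" by simp
      have e: "\<sigma> (xs!j) = ys'!j" using \<sigma>(3) j by simp
      have n1: "ys'!j \<noteq> y" using Cons.prems(2,3) ys j by (metis distinct.simps(2) nth_mem length_Cons Suc_inject)
      have n2: "ys'!j \<noteq> \<sigma> x"
      proof
        assume "ys'!j = \<sigma> x"
        then have "xs!j = x" using e inj by (metis injD)
        then show False using Cons.prems(1) j by (metis distinct.simps(2) nth_mem)
      qed
      show ?thesis using Suc e n1 n2 by (simp add: \<tau>_def sw_def ys)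
    qed
  qed
  ultimately show ?case by blast
qed


lemma match_bij:
  assumes "\<pi> \<in> atom_aut" "\<pi>' \<in> atom_aut"
    and pat: "\<forall>b\<in>set bs. (\<pi> b \<in> set ds \<longleftrightarrow> \<pi>' b \<in> set ds) \<and> (\<pi>' b \<in> set ds \<longrightarrow> \<pi> b = \<pi>' b)"
  shows "\<exists>\<sigma>\<in>fix_aut ds. \<forall>b\<in>set bs. \<sigma> (\<pi>' b) = \<pi> b"
proof -
  have b: "bij \<pi>" "bij \<pi>'" using assms(1,2) by (auto simp: atom_aut_def)
  define xs where "xs = remdups (filter (\<lambda>a. a \<notin> set ds) (map \<pi>' bs))"
  define h where "h = \<pi> \<circ> inv \<pi>'"
  have hx: "h (\<pi>' b) = \<pi> b" for b using b by (simp add: h_def bij_is_inj)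
  have injh: "inj h" unfolding h_def using b by (metis bij_comp bij_imp_bij_inv bij_is_inj)
  have "\<exists>\<sigma>. bij \<sigma> \<and> (\<forall>d\<in>set ds. \<sigma> d = d) \<and> (\<forall>i<length xs. \<sigma> (xs!i) = map h xs!i)"
  proof (rule ext_bij)
    show "distinct xs" by (simp add: xs_def)
    show "distinct (map h xs)" using injh \<open>distinct xs\<close> by (simp add: distinct_map inj_def inj_on_def)
    show "length xs = length (map h xs)" by simp
    show "set xs \<inter> set ds = {}" by (auto simp: xs_def)
    show "set (map h xs) \<inter> set ds = {}"
    proof (rule ccontr)
      assume "set (map h xs) \<inter> set ds \<noteq> {}"
      then obtain a where a: "a \<in> set xs" "h a \<in> set ds" by auto
      then obtain b where b: "b \<in> set bs" "a = \<pi>' b" "\<pi>' b \<notin> set ds" by (auto simp: xs_def)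
      have "\<pi> b \<in> set ds" using a(2) b(2) hx by simp
      then show False using pat b(1,3) by blast
    qed
  qed
  then obtain \<sigma> where \<sigma>: "bij \<sigma>" "\<forall>d\<in>set ds. \<sigma> d = d" "\<forall>i<length xs. \<sigma> (xs!i) = map h xs!i"
    by blast
  have sx: "\<forall>a\<in>set xs. \<sigma> a = h a" using \<sigma>(3) by (metis in_set_conv_nth nth_map)
  have "\<sigma> \<in> fix_aut ds" using \<sigma> by (simp add: fix_aut_def atom_aut_def)
  moreover have "\<forall>b\<in>set bs. \<sigma> (\<pi>' b) = \<pi> b"
  proof
    fix b assume bb: "b \<in> set bs"
    show "\<sigma> (\<pi>' b) = \<pi> b"
    proof (cases "\<pi>' b \<in> set ds")
      case True
      then have "\<pi> b = \<pi>' b" using pat bb by blast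
      moreover have "\<sigma> (\<pi>' b) = \<pi>' b" using \<sigma>(2) True by blast
      ultimately show ?thesis by simp
    next
      case False
      then have "\<pi>' b \<in> set xs" using bb by (auto simp: xs_def)
      then have "\<sigma> (\<pi>' b) = h (\<pi>' b)" using sx by blast
      then show ?thesis using hx by simp
    qed
  qed
  ultimately show ?thesis by blast
qed

lemma refine:
  assumes "comp_law act" "supports act bs r"
  shows "\<exists>Z. finite Z \<and> (\<lambda>\<pi>. act \<pi> r) ` atom_aut \<subseteq> (\<Union>z\<in>Z. orbit_under (fix_aut ds) act z)"
proof -
  define pat where "pat \<pi> = restrict (\<lambda>b. if \<pi> b \<in> set ds then Some (\<pi> b) else None) (set bs)"
    for \<pi> :: "atom \<Rightarrow> atom"
  define P where "P = pat ` atom_aut"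
  have "P \<subseteq> set bs \<rightarrow>\<^sub>E insert None (Some ` set ds)"
    by (auto simp: P_def pat_def)
  then have fP: "finite P" by (rule finite_subset) (intro finite_PiE; simp)
  define rep where "rep p = (SOME \<pi>. \<pi> \<in> atom_aut \<and> pat \<pi> = p)" for p
  have rep: "rep p \<in> atom_aut \<and> pat (rep p) = p" if "p \<in> P" for p
  proof -
    obtain \<pi> where "\<pi> \<in> atom_aut" "pat \<pi> = p" using \<open>p \<in> P\<close> unfolding P_def by blast
    then show ?thesis unfolding rep_def using someI[of "\<lambda>\<pi>. \<pi> \<in> atom_aut \<and> pat \<pi> = p" \<pi>] by blast
  qed
  define Z where "Z = (\<lambda>p. act (rep p) r) ` P"
  have "(\<lambda>\<pi>. act \<pi> r) ` atom_aut \<subseteq> (\<Union>z\<in>Z. orbit_under (fix_aut ds) act z)"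
  proof
    fix y assume "y \<in> (\<lambda>\<pi>. act \<pi> r) ` atom_aut"
    then obtain \<pi> where \<pi>: "\<pi> \<in> atom_aut" "y = act \<pi> r" by blast
    define \<pi>' where "\<pi>' = rep (pat \<pi>)"
    have pP: "pat \<pi> \<in> P" using \<pi> by (simp add: P_def)
    have \<pi>': "\<pi>' \<in> atom_aut" "pat \<pi>' = pat \<pi>" using rep[OF pP] by (auto simp: \<pi>'_def)
    have "\<forall>b\<in>set bs. (\<pi> b \<in> set ds \<longleftrightarrow> \<pi>' b \<in> set ds) \<and> (\<pi>' b \<in> set ds \<longrightarrow> \<pi> b = \<pi>' b)"
    proof
      fix b assume bb: "b \<in> set bs"
      have "pat \<pi>' b = pat \<pi> b" using \<pi>'(2) by simp
      then show "(\<pi> b \<in> set ds \<longleftrightarrow> \<pi>' b \<in> set ds) \<and> (\<pi>' b \<in> set ds \<longrightarrow> \<pi> b = \<pi>' b)"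
        using bb by (auto simp: pat_def split: if_splits)
    qed
    then obtain \<sigma> where \<sigma>: "\<sigma> \<in> fix_aut ds" "\<forall>b\<in>set bs. \<sigma> (\<pi>' b) = \<pi> b"
      using match_bij[OF \<pi>(1) \<pi>'(1)] by blast
    have sa: "\<sigma> \<in> atom_aut" using \<sigma>(1) fix_aut_sub by blast
    have "y = act (\<sigma> \<circ> \<pi>') r"
      unfolding \<pi>(2)
      by (rule supports_agree[OF assms \<pi>(1) aut_comp[OF sa \<pi>'(1)]]) (use \<sigma>(2) in auto)
    also have "\<dots> = act \<sigma> (act \<pi>' r)" using cl[OF assms(1) sa \<pi>'(1)] .
    finally have "y \<in> orbit_under (fix_aut ds) act (act \<pi>' r)"
      using \<sigma>(1) by (auto simp: orbit_under_def)
    moreover have "act \<pi>' r \<in> Z" using pP by (simp add: Z_def \<pi>'_def)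
    ultimately show "y \<in> (\<Union>z\<in>Z. orbit_under (fix_aut ds) act z)" by blast
  qed
  moreover have "finite Z" using fP by (simp add: Z_def)
  ultimately show ?thesis by blast
qed

lemma of_cover:
  assumes "is_action act" "orbit_finite act Y"
  shows "\<exists>Z. finite Z \<and> Y \<subseteq> (\<Union>z\<in>Z. orbit_under (fix_aut ds) act z)"
proof -
  obtain as R where R: "finite R" "Y = (\<Union>r\<in>R. orbit_under (fix_aut as) act r)"
    using assms(2) by (auto simp: orbit_finite_def)
  have rY: "r \<in> Y" if "r \<in> R" for r
  proof -
    have "act id r = r" using assms(1) unfolding is_action_def by blast
    then have "r \<in> orbit_under (fix_aut as) act r" unfolding orbit_under_def using fix_aut_id by (metis image_eqI)
    then show ?thesis using that R(2) by blast
  qed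
  have "\<forall>r\<in>R. \<exists>Z. finite Z \<and> (\<lambda>\<pi>. act \<pi> r) ` atom_aut \<subseteq> (\<Union>z\<in>Z. orbit_under (fix_aut ds) act z)"
  proof
    fix r assume "r \<in> R"
    then have "fin_supp act r" using rY assms(2) unfolding orbit_finite_def by blast
    then obtain bs where "supports act bs r" unfolding fin_supp_def by blast
    then show "\<exists>Z. finite Z \<and> (\<lambda>\<pi>. act \<pi> r) ` atom_aut \<subseteq> (\<Union>z\<in>Z. orbit_under (fix_aut ds) act z)"
      by (rule refine[OF is_action_comp_law[OF assms(1)]])
  qed
  from bchoice[OF this] obtain Zf where Zf: "\<forall>r\<in>R. finite (Zf r) \<and> (\<lambda>\<pi>. act \<pi> r) ` atom_aut \<subseteq> (\<Union>z\<in>Zf r. orbit_under (fix_aut ds) act z)"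
    by blast
  have "Y \<subseteq> (\<Union>z\<in>(\<Union>r\<in>R. Zf r). orbit_under (fix_aut ds) act z)"
  proof
    fix y assume "y \<in> Y"
    then obtain r where r: "r \<in> R" "y \<in> orbit_under (fix_aut as) act r" using R(2) by blast
    then have "y \<in> (\<lambda>\<pi>. act \<pi> r) ` atom_aut" using fix_aut_sub unfolding orbit_under_def by blast
    then have "y \<in> (\<Union>z\<in>Zf r. orbit_under (fix_aut ds) act z)" using Zf r(1) by blast
    then obtain z where "z \<in> Zf r" "y \<in> orbit_under (fix_aut ds) act z" by blast
    then show "y \<in> (\<Union>z\<in>(\<Union>r\<in>R. Zf r). orbit_under (fix_aut ds) act z)" using r(1) by blast
  qed
  moreover have "finite (\<Union>r\<in>R. Zf r)" by (rule finite_UN_I[OF R(1)]) (use Zf in blast)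
  ultimately show ?thesis by blast
qed

lemma finite_supported:
  assumes "is_action act" "orbit_finite act Y"
  shows "finite {y\<in>Y. supports act ds y}"
proof -
  obtain Z where Z: "finite Z" "Y \<subseteq> (\<Union>z\<in>Z. orbit_under (fix_aut ds) act z)"
    using of_cover[OF assms] by blast
  have "{y\<in>Y. supports act ds y} \<subseteq> Z"
  proof
    fix y assume y: "y \<in> {y\<in>Y. supports act ds y}"
    then obtain z \<sigma> where z: "z \<in> Z" "\<sigma> \<in> fix_aut ds" "y = act \<sigma> z"
      using Z(2) by (auto simp: orbit_under_def)
    have "\<sigma> \<in> atom_aut" using z(2) fix_aut_sub by blast
    then have "z = act (inv \<sigma>) y" using z(3) act_inv_act[OF assms(1)] by simp
    also have "\<dots> = y" using y fix_aut_inv[OF z(2)] by (simp add: supports_def)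
    finally show "y \<in> Z" using z(1) by simp
  qed
  then show ?thesis using Z(1) finite_subset by blast
qed


lemma equiv_mem: "equivariant act X \<Longrightarrow> \<pi> \<in> atom_aut \<Longrightarrow> x \<in> X \<Longrightarrow> act \<pi> x \<in> X"
  unfolding equivariant_def by blast

lemma fa_comp:
  assumes "is_action actX" "equivariant actX X" "\<pi> \<in> atom_aut" "\<sigma> \<in> atom_aut" "is_action actY"
  shows "fun_act actX actY X (\<pi> \<circ> \<sigma>) f = fun_act actX actY X \<pi> (fun_act actX actY X \<sigma> f)"
proof -
  have bi: "bij \<pi>" "bij \<sigma>" using assms by (auto simp: atom_aut_def)
  have iv: "inv (\<pi> \<circ> \<sigma>) = inv \<sigma> \<circ> inv \<pi>" using o_inv_distrib[OF bi] .
  show ?thesis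
  proof (rule ext)
    fix x
    show "fun_act actX actY X (\<pi> \<circ> \<sigma>) f x = fun_act actX actY X \<pi> (fun_act actX actY X \<sigma> f) x"
    proof (cases "x \<in> X")
      case True
      have m: "actX (inv \<pi>) x \<in> X" using equiv_mem[OF assms(2) aut_inv[OF assms(3)] True] .
      have "actX (inv \<sigma> \<circ> inv \<pi>) x = actX (inv \<sigma>) (actX (inv \<pi>) x)"
        using assms(1) aut_inv[OF assms(3)] aut_inv[OF assms(4)] by (simp add: is_action_def)
      moreover have "actY (\<pi> \<circ> \<sigma>) y = actY \<pi> (actY \<sigma> y)" for y
        using assms(3,4,5) by (simp add: is_action_def)
      ultimately show ?thesis using True m by (simp add: fun_act_def iv)
    qed (simp add: fun_act_def)
  qed
qed

lemma fa_comp_law: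
  "is_action actX \<Longrightarrow> is_action actY \<Longrightarrow> equivariant actX X \<Longrightarrow> comp_law (fun_act actX actY X)"
  unfolding comp_law_def by (blast intro: fa_comp)

lemma fa_id:
  assumes "is_action actX" "is_action actY" "f \<in> extensional X"
  shows "fun_act actX actY X id f = f"
proof (rule ext)
  fix x show "fun_act actX actY X id f x = f x"
    using assms by (auto simp: fun_act_def is_action_def inv_id extensional_def)
qed

lemma fa_inv_cancel:
  assumes "is_action actX" "is_action actY" "equivariant actX X" "\<rho> \<in> atom_aut" "f \<in> extensional X"
  shows "fun_act actX actY X (inv \<rho>) (fun_act actX actY X \<rho> f) = f"
proof -
  have "inv \<rho> \<circ> \<rho> = id" using assms(4) by (simp add: atom_aut_def bij_is_inj)
  then have "fun_act actX actY X (inv \<rho>) (fun_act actX actY X \<rho> f) = fun_act actX actY X id f"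
    using fa_comp[OF assms(1,3) aut_inv[OF assms(4)] assms(4) assms(2)] by simp
  also have "\<dots> = f" using fa_id[OF assms(1,2,5)] .
  finally show ?thesis .
qed


lemma forward:
  assumes "is_action actX" "is_action actY" "equivariant actX X"
    and "\<forall>f\<in>F. fin_supp (fun_act actX actY X) f"
    and "orbit_finite (fun_act actX actY X) F"
  shows "\<exists>k::nat. \<forall>f\<in>F. supp_by_at_most (fun_act actX actY X) k f"
proof -
  let ?fa = "fun_act actX actY X"
  have CL: "comp_law ?fa" using fa_comp_law assms(1-3) by blast
  obtain as R where R: "finite R" "F = (\<Union>r\<in>R. orbit_under (fix_aut as) ?fa r)"
    using assms(5) by (auto simp: orbit_finite_def)
  have inF: "?fa id r \<in> F" if "r \<in> R" for r
  proof -
    have "?fa id r \<in> orbit_under (fix_aut as) ?fa r" unfolding orbit_under_def using fix_aut_id by (rule imageI)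
    then show ?thesis using that R(2) by blast
  qed
  have "\<forall>r\<in>R. \<exists>bs. supports ?fa bs (?fa id r)"
    using inF assms(4) unfolding fin_supp_def by blast
  from bchoice[OF this] obtain bs where bs: "\<forall>r\<in>R. supports ?fa (bs r) (?fa id r)" by blast
  have "\<forall>f\<in>F. supp_by_at_most ?fa (\<Sum>r\<in>R. length (bs r)) f"
  proof
    fix f assume "f \<in> F"
    then obtain r where r0: "r \<in> R" "f \<in> orbit_under (fix_aut as) ?fa r"
      using R(2) by blast
    then obtain \<pi> where "\<pi> \<in> fix_aut as" "f = ?fa \<pi> r" unfolding orbit_under_def by blast
    with r0 have r: "r \<in> R" "\<pi> \<in> fix_aut as" "f = ?fa \<pi> r" by auto
    have pa: "\<pi> \<in> atom_aut" using r(2) fix_aut_sub by blast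
    have "f = ?fa (\<pi> \<circ> id) r" using r(3) by simp
    also have "\<dots> = ?fa \<pi> (?fa id r)" using cl[OF CL pa aut_id] .
    finally have "supports ?fa (map \<pi> (bs r)) f"
      using supports_act[OF CL _ pa] bs r(1) by metis
    moreover have "length (map \<pi> (bs r)) \<le> (\<Sum>r\<in>R. length (bs r))"
      using member_le_sum[OF r(1) _ R(1), of "\<lambda>r. length (bs r)"] by simp
    ultimately show "supp_by_at_most ?fa (\<Sum>r\<in>R. length (bs r)) f"
      unfolding supp_by_at_most_def by blast
  qed
  then show ?thesis by blast
qed

lemma canon:
  assumes "is_action actX" "is_action actY" "equivariant actX X"
    and "F \<subseteq> X \<rightarrow>\<^sub>E Y" and "equivariant (fun_act actX actY X) F"
    and "f \<in> F" and "supp_by_at_most (fun_act actX actY X) k f"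
  shows "\<exists>\<pi>\<in>atom_aut. \<exists>g\<in>F. supports (fun_act actX actY X) [0..<k] g \<and> f = fun_act actX actY X \<pi> g"
proof -
  let ?fa = "fun_act actX actY X"
  have CL: "comp_law ?fa" using fa_comp_law assms(1-3) by blast
  obtain as where as: "length as \<le> k" "supports ?fa as f"
    using assms(7) by (auto simp: supp_by_at_most_def)
  define xs where "xs = remdups as"
  have "\<exists>\<sigma>. bij \<sigma> \<and> (\<forall>d\<in>{}. \<sigma> d = d) \<and> (\<forall>i<length xs. \<sigma> (xs!i) = [0..<length xs]!i)"
    by (rule ext_bij) (auto simp: xs_def)
  then obtain \<rho> where \<rho>: "bij \<rho>" "\<forall>i<length xs. \<rho> (xs!i) = i" by auto
  have ra: "\<rho> \<in> atom_aut" using \<rho>(1) by (simp add: atom_aut_def)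
  define g where "g = ?fa \<rho> f"
  have "?fa \<rho> ` F = F" using assms(5) ra unfolding equivariant_def by blast
  then have gF: "g \<in> F" using assms(6) unfolding g_def by blast
  have "set (map \<rho> as) \<subseteq> set [0..<k]"
  proof
    fix y assume "y \<in> set (map \<rho> as)"
    then obtain a where a: "a \<in> set as" "y = \<rho> a" by auto
    then obtain i where i: "i < length xs" "a = xs!i" by (metis in_set_conv_nth set_remdups xs_def)
    have "length xs \<le> k" unfolding xs_def using as(1) length_remdups_leq[of as] by linarith
    then show "y \<in> set [0..<k]" using i \<rho>(2) a(2) by auto
  qed
  moreover have "supports ?fa (map \<rho> as) g"
    using supports_act[OF CL as(2) ra] unfolding g_def .
  ultimately have "supports ?fa [0..<k] g"
    by (rule supports_mono)
  moreover have "f = ?fa (inv \<rho>) g"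
    unfolding g_def
  proof (rule fa_inv_cancel[symmetric, OF assms(1,2,3) ra])
    have "f \<in> X \<rightarrow>\<^sub>E Y" using assms(4,6) by blast
    then show "f \<in> extensional X" by (simp add: PiE_def)
  qed
  ultimately show ?thesis using gF aut_inv[OF ra] by blast
qed


lemma fa_fix_eval:
  assumes "is_action actX" "supports (fun_act actX actY X) c g" "\<sigma> \<in> fix_aut c"
    "j \<in> X" "\<sigma> \<in> atom_aut" "actX \<sigma> j \<in> X"
  shows "g (actX \<sigma> j) = actY \<sigma> (g j)"
proof -
  have "fun_act actX actY X \<sigma> g = g" using assms(2,3) unfolding supports_def by blast
  then have "g (actX \<sigma> j) = fun_act actX actY X \<sigma> g (actX \<sigma> j)" by simp
  also have "\<dots> = actY \<sigma> (g (actX (inv \<sigma>) (actX \<sigma> j)))" using assms(6) by (simp add: fun_act_def)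
  also have "actX (inv \<sigma>) (actX \<sigma> j) = j" using act_inv_act[OF assms(1) assms(5)] .
  finally show ?thesis .
qed

lemma finite_FC:
  assumes "is_action actX" "is_action actY" "equivariant actX X"
    "orbit_finite actX X" "orbit_finite actY Y" "F \<subseteq> X \<rightarrow>\<^sub>E Y"
  shows "finite {g\<in>F. supports (fun_act actX actY X) c g}"
proof -
  let ?fa = "fun_act actX actY X"
  let ?FC = "{g\<in>F. supports ?fa c g}"
  let ?O = "\<lambda>z. orbit_under (fix_aut c) actX z"
  obtain ZX where ZX: "finite ZX" "X \<subseteq> (\<Union>z\<in>ZX. ?O z)"
    using of_cover[OF assms(1,4)] by blast
  define ZX' where "ZX' = {z\<in>ZX. ?O z \<inter> X \<noteq> {}}"
  define rep where "rep z = (SOME x. x \<in> ?O z \<inter> X)" for z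
  have rep: "rep z \<in> ?O z \<inter> X" if "z \<in> ZX'" for z
  proof -
    obtain x where "x \<in> ?O z \<inter> X" using \<open>z \<in> ZX'\<close> unfolding ZX'_def by blast
    then show ?thesis unfolding rep_def by (rule someI)
  qed
  define J where "J = rep ` ZX'"
  have fJ: "finite J" unfolding J_def ZX'_def using ZX(1) by simp
  have JX: "J \<subseteq> X" unfolding J_def using rep by blast
  have cover: "\<exists>j\<in>J. \<exists>\<sigma>\<in>fix_aut c. x = actX \<sigma> j" if x: "x \<in> X" for x
  proof -
    obtain z where z: "z \<in> ZX" "x \<in> ?O z" using ZX(2) x by blast
    then have zz: "z \<in> ZX'" unfolding ZX'_def using x by blast
    obtain \<sigma>1 where s1: "\<sigma>1 \<in> fix_aut c" "rep z = actX \<sigma>1 z"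
      using rep[OF zz] unfolding orbit_under_def by blast
    obtain \<sigma>2 where s2: "\<sigma>2 \<in> fix_aut c" "x = actX \<sigma>2 z"
      using z(2) unfolding orbit_under_def by blast
    have a1: "\<sigma>1 \<in> atom_aut" "\<sigma>2 \<in> atom_aut" using s1(1) s2(1) fix_aut_sub by blast+
    have "actX (\<sigma>2 \<circ> inv \<sigma>1) (rep z) = actX \<sigma>2 (actX (inv \<sigma>1) (actX \<sigma>1 z))"
      using s1(2) cl[OF is_action_comp_law[OF assms(1)] a1(2) aut_inv[OF a1(1)]] by simp
    also have "\<dots> = x" using act_inv_act[OF assms(1) a1(1)] s2(2) by simp
    finally have "x = actX (\<sigma>2 \<circ> inv \<sigma>1) (rep z)" by simp
    moreover have "\<sigma>2 \<circ> inv \<sigma>1 \<in> fix_aut c" using fix_aut_comp[OF s2(1) fix_aut_inv[OF s1(1)]] .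
    moreover have "rep z \<in> J" using zz unfolding J_def by blast
    ultimately show ?thesis by blast
  qed
  have "\<forall>j\<in>J. \<exists>bs. supports actX bs j"
    using JX assms(4) unfolding orbit_finite_def fin_supp_def by blast
  from bchoice[OF this] obtain bsj where bsj: "\<forall>j\<in>J. supports actX (bsj j) j" by blast
  define S where "S = (\<Union>j\<in>J. {y\<in>Y. supports actY (c @ bsj j) y})"
  have fS: "finite S" unfolding S_def using fJ finite_supported[OF assms(2,5)] by blast
  have extF: "g \<in> extensional X" "\<And>x. x \<in> X \<Longrightarrow> g x \<in> Y" if "g \<in> F" for g
  proof -
    have "g \<in> X \<rightarrow>\<^sub>E Y" using that assms(6) by blast
    then show "g \<in> extensional X" "\<And>x. x \<in> X \<Longrightarrow> g x \<in> Y" by (auto simp: PiE_def)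
  qed
  have inS: "g j \<in> S" if g: "g \<in> ?FC" and j: "j \<in> J" for g j
  proof -
    have jX: "j \<in> X" using j JX by blast
    have "supports actY (c @ bsj j) (g j)" unfolding supports_def
    proof
      fix \<sigma> assume s: "\<sigma> \<in> fix_aut (c @ bsj j)"
      have sc: "\<sigma> \<in> fix_aut c" and sb: "\<sigma> \<in> fix_aut (bsj j)" and sa: "\<sigma> \<in> atom_aut"
        using s by (auto simp: fix_aut_def)
      have "actX \<sigma> j = j" using bsj j sb unfolding supports_def by blast
      then have "g (actX \<sigma> j) = actY \<sigma> (g j)"
        using fa_fix_eval[OF assms(1) _ sc jX sa] g jX by auto
      then show "actY \<sigma> (g j) = g j" using \<open>actX \<sigma> j = j\<close> by simp
    qed
    moreover have "g j \<in> Y" using extF(2)[of g j] g jX by blast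
    ultimately show ?thesis unfolding S_def using j by blast
  qed
  have inj: "inj_on (\<lambda>g. restrict g J) ?FC"
  proof (rule inj_onI)
    fix g1 g2 assume g1: "g1 \<in> ?FC" and g2: "g2 \<in> ?FC" and eq: "restrict g1 J = restrict g2 J"
    show "g1 = g2"
    proof (rule ext)
      fix x show "g1 x = g2 x"
      proof (cases "x \<in> X")
        case True
        then obtain j \<sigma> where js: "j \<in> J" "\<sigma> \<in> fix_aut c" "x = actX \<sigma> j" using cover by blast
        have sa: "\<sigma> \<in> atom_aut" using js(2) fix_aut_sub by blast
        have jX: "j \<in> X" using js(1) JX by blast
        have "g1 x = actY \<sigma> (g1 j)" using fa_fix_eval[OF assms(1) _ js(2) jX sa] g1 js(3) True by auto
        moreover have "g2 x = actY \<sigma> (g2 j)" using fa_fix_eval[OF assms(1) _ js(2) jX sa] g2 js(3) True by auto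
        moreover have "g1 j = g2 j" using eq js(1) by (metis restrict_apply')
        ultimately show ?thesis by simp
      next
        case False
        then show ?thesis using extF(1)[of g1] extF(1)[of g2] g1 g2 by (simp add: extensional_def)
      qed
    qed
  qed
  have "(\<lambda>g. restrict g J) ` ?FC \<subseteq> J \<rightarrow>\<^sub>E S" using inS by auto
  then have "finite ((\<lambda>g. restrict g J) ` ?FC)" using finite_PiE[OF fJ, of "\<lambda>_. S"] fS finite_subset by blast
  then show ?thesis using finite_imageD inj by blast
qed

lemma backward:
  assumes "is_action actX" "is_action actY" "equivariant actX X"
    and "orbit_finite actX X" "orbit_finite actY Y"
    and "F \<subseteq> X \<rightarrow>\<^sub>E Y" and "\<forall>f\<in>F. fin_supp (fun_act actX actY X) f"
    and "equivariant (fun_act actX actY X) F"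
    and "\<forall>f\<in>F. supp_by_at_most (fun_act actX actY X) k f"
  shows "orbit_finite (fun_act actX actY X) F"
proof -
  let ?fa = "fun_act actX actY X"
  let ?FC = "{g\<in>F. supports ?fa [0..<k] g}"
  have "F = (\<Union>r\<in>?FC. orbit_under (fix_aut []) ?fa r)"
  proof
    show "F \<subseteq> (\<Union>r\<in>?FC. orbit_under (fix_aut []) ?fa r)"
    proof
      fix f assume f: "f \<in> F"
      obtain \<pi> g where pg: "\<pi> \<in> atom_aut" "g \<in> F" "supports ?fa [0..<k] g" "f = ?fa \<pi> g"
        using canon[OF assms(1,2,3,6,8) f] assms(9) f by blast
      then have "f \<in> orbit_under (fix_aut []) ?fa g" unfolding orbit_under_def fix_aut_Nil by blast
      then show "f \<in> (\<Union>r\<in>?FC. orbit_under (fix_aut []) ?fa r)" using pg(2,3) by blast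
    qed
  next
    show "(\<Union>r\<in>?FC. orbit_under (fix_aut []) ?fa r) \<subseteq> F"
    proof
      fix f assume "f \<in> (\<Union>r\<in>?FC. orbit_under (fix_aut []) ?fa r)"
      then obtain g \<pi> where "g \<in> F" "\<pi> \<in> atom_aut" "f = ?fa \<pi> g"
        unfolding orbit_under_def fix_aut_Nil by blast
      moreover have "?fa \<pi> ` F = F" using assms(8) \<open>\<pi> \<in> atom_aut\<close> unfolding equivariant_def by blast
      ultimately show "f \<in> F" by blast
    qed
  qed
  moreover have "finite ?FC" using finite_FC[OF assms(1-6)] .
  ultimately show ?thesis using assms(7) unfolding orbit_finite_def by blast
qed

theorem mainTheorem3:
  fixes actX :: "(atom \<Rightarrow> atom) \<Rightarrow> 'x \<Rightarrow> 'x"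
    and actY :: "(atom \<Rightarrow> atom) \<Rightarrow> 'y \<Rightarrow> 'y"
    and X :: "'x set" and Y :: "'y set"
    and F :: "('x \<Rightarrow> 'y) set"
  assumes "is_action actX" and "is_action actY"
    and "equivariant actX X" and "equivariant actY Y"
    and "orbit_finite actX X" and "orbit_finite actY Y"
    and "F \<subseteq> X \<rightarrow>\<^sub>E Y"
    and "\<forall>f\<in>F. fin_supp (fun_act actX actY X) f"
    and "equivariant (fun_act actX actY X) F"
  shows "orbit_finite (fun_act actX actY X) F \<longleftrightarrow>
         (\<exists>k::nat. \<forall>f\<in>F. supp_by_at_most (fun_act actX actY X) k f)"
proof
  assume "orbit_finite (fun_act actX actY X) F"
  then show "\<exists>k::nat. \<forall>f\<in>F. supp_by_at_most (fun_act actX actY X) k f"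
    using forward[OF assms(1,2,3,8)] by blast
next
  assume "\<exists>k::nat. \<forall>f\<in>F. supp_by_at_most (fun_act actX actY X) k f"
  then obtain k where "\<forall>f\<in>F. supp_by_at_most (fun_act actX actY X) k f" by blast
  then show "orbit_finite (fun_act actX actY X) F"
    using backward[OF assms(1,2,3,5,6,7,8,9)] by blast
qed

end
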